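(* Fix $C\in\mathbb C$ and let $f(x)=C/(x-1)^2\in\mathbb C[[x]]$. Let $b(\lambda,x)=\sum_{k\ge-1}b_k(x)\lambda^{-k-1}$, $b_{-1}=1$, $b_k\in\mathbb C[[x]]$, be the unique such series satisfying $b\,b_{xx}-\frac12b_x^2-2(\lambda-2f)b^2=-2\lambda$, and let $$R(\lambda,x)=\begin{pmatrix}\frac12b_x&b\\(\lambda-2f)b-\frac12b_{xx}&-\frac12b_x\end{pmatrix}.$$ Then $b(\lambda,x)$ depends only on $\zeta:=\lambda(x-1)^2$, namely $b=G_{1/2}(\zeta)$, and $$R=\begin{pmatrix}-\frac{C\lambda^{1/2}}{\zeta^{3/2}}G_{3/2}(\zeta)&G_{1/2}(\zeta)\\\frac{\lambda}{\zeta}\Bigl((\zeta-2C)G_{1/2}(\zeta)-\frac{3C}{\zeta}G_{3/2}(\zeta)-\frac{6C(C+1)}{\zeta^2}G_{5/2}(\zeta)\Bigr)&\frac{C\lambda^{1/2}}{\zeta^{3/2}}G_{3/2}(\zeta)\end{pmatrix},$$ where $\zeta^{3/2}:=\lambda^{3/2}(x-1)^3$, $\Delta:=1-8C$, and $$G_\alpha(\zeta):={}_3F_0\Bigl(\alpha,\alpha+\tfrac{\sqrt\Delta}2,\alpha-\tfrac{\sqrt\Delta}2;;\tfrac1\zeta\Bigr)=\sum_{k\ge0}\frac{(\alpha)_k(\alpha+\frac{\sqrt\Delta}2)_k(\alpha-\frac{\sqrt\Delta}2)_k}{k!}\zeta^{-k}.$$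
   Context: $(a)_k=a(a+1)\cdots(a+k-1)$ is the rising Pochhammer symbol; $G_\alpha$ is a formal series in $\zeta^{-1}$ whose coefficients are polynomials in $\Delta$ (hence in $C$). The matrix $R(\lambda,x)$ is the basic matrix resolvent of the KdV solution with initial data $f$, evaluated at $t_{>0}=0$. *)

theory Defs
  imports Complex_Main "HOL-Computational_Algebra.Formal_Power_Series"
    "HOL-Computational_Algebra.Formal_Laurent_Series"
begin

text \<open>Series in lambda^(-1) with coefficients in C[[x]] are modelled as
  complex fps fls: the Laurent variable fls_X is mu = lambda^(-1), so
  lambda = fls_X_inv; the inner fps variable fps_X is x.\<close>

lift_definition xderiv :: "complex fps fls \<Rightarrow> complex fps fls" is
  "\<lambda>f n. fps_deriv (f n)"
  by (simp add: eventually_mono)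

definition lam :: "complex fps fls" where
  "lam = fls_X_inv"

abbreviation xc :: "complex fps \<Rightarrow> complex fps fls" where
  "xc p \<equiv> fls_const p"

abbreviation cc :: "complex \<Rightarrow> complex fps fls" where
  "cc c \<equiv> fls_const (fps_const c)"

definition fpot :: "complex \<Rightarrow> complex fps" where
  "fpot C = fps_const C * inverse ((fps_X - 1) ^ 2)"

definition zeta :: "complex fps fls" where
  "zeta = lam * xc ((fps_X - 1) ^ 2)"

definition zeta_inv :: "complex fps fls" where
  "zeta_inv = fls_X * xc (inverse ((fps_X - 1) ^ 2))"

text \<open>lambda^(1/2) / zeta^(3/2) with zeta^(3/2) := lambda^(3/2) (x-1)^3,
  i.e. lambda^(-1) (x-1)^(-3).\<close>
definition lam_half_over_zeta32 :: "complex fps fls" where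
  "lam_half_over_zeta32 = fls_X * xc (inverse ((fps_X - 1) ^ 3))"

definition Gcoeff :: "complex \<Rightarrow> complex \<Rightarrow> nat \<Rightarrow> complex" where
  "Gcoeff C \<alpha> k =
     (let s = csqrt (1 - 8 * C) in
      pochhammer \<alpha> k * pochhammer (\<alpha> + s / 2) k * pochhammer (\<alpha> - s / 2) k / fact k)"

text \<open>G_alpha(zeta) = sum_k Gcoeff k * zeta^(-k), with
  zeta^(-k) = lambda^(-k) (x-1)^(-2k).\<close>
definition Gzeta :: "complex \<Rightarrow> complex \<Rightarrow> complex fps fls" where
  "Gzeta C \<alpha> = fps_to_fls (Abs_fps (\<lambda>k.
      fps_const (Gcoeff C \<alpha> k) * inverse ((fps_X - 1) ^ (2 * k))))"

end

theory Submission
  imports Defs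
begin

unbundle fps_syntax

lemma xderiv_nth [simp]: "fls_nth (xderiv F) n = fps_deriv (fls_nth F n)"
  by (simp add: xderiv.rep_eq)

lemma fls_times_nth_gen:
  fixes f g :: "'a::comm_ring_1 fls"
  assumes "\<forall>i<a. f $$ i = 0" "\<forall>i<c. g $$ i = 0"
  shows "(f*g) $$ n = (\<Sum>i=a..n-c. f $$ i * g $$ (n-i))"
proof (cases "f = 0 \<or> g = 0")
  case True then show ?thesis by auto
next
  case False
  then have nz: "f \<noteq> 0" "g \<noteq> 0" by auto
  have a: "a \<le> fls_subdegree f"
    using assms(1) nth_fls_subdegree_nonzero[OF nz(1)] by (meson not_le)
  have c: "c \<le> fls_subdegree g"
    using assms(2) nth_fls_subdegree_nonzero[OF nz(2)] by (meson not_le)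
  have "(f*g) $$ n = (\<Sum>i=fls_subdegree f..n - fls_subdegree g. f $$ i * g $$ (n - i))"
    by (rule fls_times_nth(2))
  also have "\<dots> = (\<Sum>i=a..n-c. f $$ i * g $$ (n-i))"
  proof (rule sum.mono_neutral_left)
    show "\<forall>i\<in>{a..n - c} - {fls_subdegree f..n - fls_subdegree g}. f $$ i * g $$ (n - i) = 0"
    proof
      fix i assume "i \<in> {a..n - c} - {fls_subdegree f..n - fls_subdegree g}"
      then have "i < fls_subdegree f \<or> n - i < fls_subdegree g" by auto
      then show "f $$ i * g $$ (n - i) = 0" by auto
    qed
  qed (use a c in auto)
  finally show ?thesis .
qed

lemma xderiv_add [simp]: "xderiv (F + G) = xderiv F + xderiv G"
  by (rule fls_eqI) (simp add: fps_deriv_add)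
lemma xderiv_diff [simp]: "xderiv (F - G) = xderiv F - xderiv G"
  by (rule fls_eqI) simp
lemma xderiv_uminus [simp]: "xderiv (- F) = - xderiv F"
  by (rule fls_eqI) simp
lemma xderiv_const [simp]: "xderiv (fls_const p) = fls_const (fps_deriv p)"
  by (rule fls_eqI) simp
lemma xderiv_numeral [simp]: "xderiv (numeral k) = 0"
  by (metis fls_const_numeral xderiv_const fps_deriv_numeral fls_const_0)
lemma xderiv_one [simp]: "xderiv 1 = 0"
  by (rule fls_eqI) simp
lemma xderiv_lam [simp]: "xderiv lam = 0"
  by (rule fls_eqI) (simp add: lam_def)
lemma xderiv_X_inv [simp]: "xderiv fls_X_inv = 0"
  by (rule fls_eqI) simp
lemma X_Xinv [simp]: "fls_X * fls_X_inv = (1::'a::comm_ring_1 fls)"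
  by (simp add: fls_X_times_conv_shift)
lemma xderiv_X [simp]: "xderiv fls_X = 0"
  by (rule fls_eqI) simp

lemma xderiv_nth_zero:
  assumes "\<forall>i<a. F $$ i = 0" shows "\<forall>i<a. xderiv F $$ i = 0"
  using assms by simp

lemma xderiv_mult [simp]: "xderiv (F * G) = xderiv F * G + F * xderiv G"
proof (rule fls_eqI)
  fix n
  define a where "a = fls_subdegree F"
  define c where "c = fls_subdegree G"
  have F0: "\<forall>i<a. F $$ i = 0" and G0: "\<forall>i<c. G $$ i = 0" by (auto simp: a_def c_def)
  have F1: "\<forall>i<a. xderiv F $$ i = 0" and G1: "\<forall>i<c. xderiv G $$ i = 0"
    using F0 G0 by auto
  show "xderiv (F * G) $$ n = (xderiv F * G + F * xderiv G) $$ n"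
    unfolding fls_plus_nth xderiv_nth fls_times_nth_gen[OF F0 G0] fls_times_nth_gen[OF F1 G0]
        fls_times_nth_gen[OF F0 G1] fps_deriv_sum fps_deriv_mult sum.distrib[symmetric]
    by (simp add: add.commute)
qed

definition yv :: "complex fps" where "yv = fps_X - 1"
definition yi :: "complex fps" where "yi = inverse yv"

lemma yv0: "yv $ 0 \<noteq> 0" by (simp add: yv_def)
lemma yv_yi [simp]: "yv * yi = 1"
  unfolding yi_def using inverse_mult_eq_1[OF yv0] by (simp add: mult.commute)
lemma deriv_yv [simp]: "fps_deriv yv = 1" by (simp add: yv_def)
lemma deriv_yi: "fps_deriv yi = - (yi ^ 2)"
  unfolding yi_def using fps_inverse_deriv[OF yv0] by simp
lemma inv_yv_pow: "inverse (yv ^ k) = yi ^ k"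
  by (simp add: yi_def fps_inverse_power)

lemma dP: "fps_deriv (fps_const c * yi ^ m) = fps_const (- (of_nat m * c)) * yi ^ (m+1)"
proof (cases m)
  case 0 then show ?thesis by simp
next
  case (Suc j)
  have "fps_deriv (yi ^ m) = fps_const (of_nat m) * fps_deriv yi * yi ^ j"
    by (simp only: fps_deriv_power Suc diff_Suc_1)
  also have "\<dots> = - (fps_const (of_nat m) * yi ^ (m+1))"
    by (simp add: deriv_yi Suc power_add[symmetric] mult.commute power2_eq_square)
  finally have "fps_deriv (yi ^ m) = - (fps_const (of_nat m) * yi ^ (m+1))" .
  then show ?thesis
    by (simp add: fps_const_mult[symmetric] fps_const_neg[symmetric] del: fps_const_mult fps_const_neg)
qed

lemma fpot_eq: "fpot C = fps_const C * yi ^ 2"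
  by (simp add: fpot_def inv_yv_pow[symmetric] yv_def)

lemma Gnth: "Gzeta C a $$ n = (if n < 0 then 0 else fps_const (Gcoeff C a (nat n)) * yi ^ (2 * nat n))"
  by (simp add: Gzeta_def inv_yv_pow[symmetric] yv_def)

definition eul :: "complex fps fls \<Rightarrow> complex fps fls" where
  "eul F = xc yv * xderiv F + 2 * (fls_X * fls_deriv F)"

lemma eul_add [simp]: "eul (F + G) = eul F + eul G"
  by (simp add: eul_def algebra_simps)
lemma eul_diff [simp]: "eul (F - G) = eul F - eul G"
  by (simp add: eul_def algebra_simps)
lemma eul_mult [simp]: "eul (F * G) = eul F * G + F * eul G"
  by (simp add: eul_def algebra_simps)
lemma eul_const [simp]: "eul (fls_const p) = xc (yv * fps_deriv p)"
  by (simp add: eul_def)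
lemma eul_numeral [simp]: "eul (numeral k) = 0"
  by (simp add: eul_def)
lemma eul_lam [simp]: "eul lam = - 2 * lam"
  by (simp add: eul_def lam_def power2_eq_square)

lemma xderiv_fls_deriv: "xderiv (fls_deriv F) = fls_deriv (xderiv F)"
  by (rule fls_eqI) (simp add: fps_deriv_mult)

lemma eul_xderiv: "eul (xderiv F) = xderiv (eul F) - xderiv F"
  by (simp add: eul_def xderiv_fls_deriv)

lemma X_times_nth [simp]: "(fls_X * (F::complex fps fls)) $$ n = F $$ (n - 1)"
  by (simp add: fls_X_times_conv_shift)
lemma lam_times_nth [simp]: "(lam * F) $$ n = F $$ (n + 1)"
  by (simp add: lam_def fls_X_inv_times_conv_shift)

lemma GR1: "Gcoeff C a (Suc k) * of_nat (Suc k) = Gcoeff C a k *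
   ((a + of_nat k) * (a + csqrt (1 - 8 * C) / 2 + of_nat k) * (a - csqrt (1 - 8 * C) / 2 + of_nat k))"
  unfolding Gcoeff_def Let_def pochhammer_Suc fact_Suc
  by (simp add: field_simps del: of_nat_Suc)

lemma GR2: "Gcoeff C a (Suc k) * of_nat (Suc k) =
   a * (a + csqrt (1 - 8 * C) / 2) * (a - csqrt (1 - 8 * C) / 2) * Gcoeff C (a + 1) k"
  unfolding Gcoeff_def Let_def pochhammer_rec fact_Suc
  by (simp add: field_simps del: of_nat_Suc)

lemma sq_diff: "(a + s / 2) * (a - s / 2) = a^2 - s^2 / (4::complex)"
  by (simp add: field_simps power2_eq_square)

lemma g1: "Gcoeff C (1/2) (Suc k) * of_nat (Suc k) = C * Gcoeff C (3/2) k"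
proof -
  have "(1/2::complex) * (1/2 + csqrt (1 - 8 * C) / 2) * (1/2 - csqrt (1 - 8 * C) / 2) = C"
    unfolding mult.assoc sq_diff by (simp add: field_simps)
  moreover have "(1/2::complex) + 1 = 3/2" by simp
  ultimately show ?thesis using GR2[of C "1/2" k] by (simp only:)
qed

lemma g2: "Gcoeff C (3/2) (Suc k) * of_nat (Suc k) = 3 * (C + 1) * Gcoeff C (5/2) k"
proof -
  have "(3/2::complex) * (3/2 + csqrt (1 - 8 * C) / 2) * (3/2 - csqrt (1 - 8 * C) / 2) = 3 * (C + 1)"
    unfolding mult.assoc sq_diff by (simp add: field_simps)
  moreover have "(3/2::complex) + 1 = 5/2" by simp
  ultimately show ?thesis using GR2[of C "3/2" k] by (simp only:)
qed

lemma gL_aux: assumes "s * s = 1 - 8 * C"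
  shows "8 * ((1/2 + k) * (1/2 + s / 2 + k) * (1/2 - s / 2 + k))
      = ((2 * k + 1) * (4 * k ^ 2 + 4 * k + 8 * (C::complex)))"
proof -
  have C: "C = (1 - s * s) / 8" using assms by simp
  show ?thesis unfolding C by (simp add: field_simps power2_eq_square)
qed

lemma gL: "8 * of_nat (Suc k) * Gcoeff C (1/2) (Suc k) =
   Gcoeff C (1/2) k * ((2 * of_nat k + 1) * (4 * of_nat k ^ 2 + 4 * of_nat k + 8 * C))"
proof -
  define s where "s = csqrt (1 - 8 * C)"
  have "s * s = 1 - 8 * C" unfolding s_def by (simp flip: power2_eq_square)
  note h2 = gL_aux[OF this, of "of_nat k"]
  have h1: "Gcoeff C (1/2) (Suc k) * of_nat (Suc k) = Gcoeff C (1/2) k *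
   ((1/2 + of_nat k) * (1/2 + s / 2 + of_nat k) * (1/2 - s / 2 + of_nat k))"
    unfolding s_def by (rule GR1)
  have "8 * of_nat (Suc k) * Gcoeff C (1/2) (Suc k) = 8 * (Gcoeff C (1/2) (Suc k) * of_nat (Suc k))"
    by (simp only: mult_ac)
  also have "\<dots> = Gcoeff C (1/2) k * (8 * ((1/2 + of_nat k) * (1/2 + s / 2 + of_nat k) * (1/2 - s / 2 + of_nat k)))"
    unfolding h1 by (simp only: mult_ac)
  also have "\<dots> = Gcoeff C (1/2) k * ((2 * of_nat k + 1) * (4 * of_nat k ^ 2 + 4 * of_nat k + 8 * C))"
    unfolding h2 ..
  finally show ?thesis .
qed

lemma yv_P: "yv * (fps_const a * yi ^ (m + 1)) = fps_const a * yi ^ m"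
proof -
  have "yv * (fps_const a * yi ^ (m + 1)) = fps_const a * yi ^ m * (yv * yi)"
    by (simp only: power_add power_one_right mult_ac)
  then show ?thesis by simp
qed

lemma of_int_nat_fps: "(of_int (int k) :: complex fps) = fps_const (of_nat k)"
  by (simp add: fps_of_nat)

lemma eul_G: "eul (Gzeta C a) = 0"
proof (rule fls_eqI)
  fix n :: int
  show "eul (Gzeta C a) $$ n = 0 $$ n"
  proof (cases "n < 0")
    case True then show ?thesis by (simp add: eul_def Gnth)
  next
    case False
    then obtain k where n: "n = int k" by (metis nonneg_int_cases not_less)
    have "eul (Gzeta C a) $$ n = yv * fps_deriv (fps_const (Gcoeff C a k) * yi ^ (2 * k))
        + 2 * (of_int n * (fps_const (Gcoeff C a k) * yi ^ (2 * k)))"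
      by (simp add: eul_def Gnth n)
    also have "\<dots> = fps_const (- (of_nat (2*k) * Gcoeff C a k)) * yi ^ (2 * k)
        + fps_const (2 * of_nat k * Gcoeff C a k) * yi ^ (2 * k)"
      unfolding dP yv_P n of_int_nat_fps by (simp add: fps_const_mult[symmetric] mult.assoc[symmetric] del: fps_const_mult)
    also have "\<dots> = 0"
      by (simp add: distrib_right[symmetric] fps_const_add[symmetric] del: fps_const_add)
    finally show ?thesis by simp
  qed
qed
definition Lop :: "complex \<Rightarrow> complex fps fls \<Rightarrow> complex fps fls" where
  "Lop C F = xderiv (xderiv (xderiv F)) - 4 * (lam - 2 * xc (fpot C)) * xderiv F
     + 4 * xc (fps_deriv (fpot C)) * F"

lemma Lop_nth: "Lop C F $$ n = fps_deriv (fps_deriv (fps_deriv (F $$ n)))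
   - 4 * (fps_deriv (F $$ (n + 1)) - 2 * (fpot C * fps_deriv (F $$ n)))
   + 4 * (fps_deriv (fpot C) * F $$ n)"
  by (simp add: Lop_def mult.assoc left_diff_distrib)

lemma Pmul: "fps_const a * yi ^ m * (fps_const b * yi ^ n) = fps_const (a * b) * yi ^ (m + n)"
  by (simp add: power_add mult_ac)

lemma L_G: "Lop C (Gzeta C (1/2)) = 0"
proof (rule fls_eqI)
  fix n :: int
  let ?g = "Gcoeff C (1/2)"
  show "Lop C (Gzeta C (1/2)) $$ n = 0 $$ n"
  proof (cases "n < 0")
    case True
    then consider "n = -1" | "n < -1" by linarith
    then show ?thesis
    proof cases
      case 1 then show ?thesis by (simp add: Lop_nth Gnth)
    next
      case 2 then show ?thesis by (simp add: Lop_nth Gnth)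
    qed
  next
    case False
    then obtain k where n: "n = int k" by (metis nonneg_int_cases not_less)
    define Y where "Y = yi ^ (2 * k + 3)"
    have e1: "2 * k + 1 + 1 + 1 = 2 * k + 3" "2 * Suc k + 1 = 2 * k + 3" "2 + (2 * k + 1) = 2 * k + 3"
      "2 + 1 + 2 * k = 2 * k + 3" by simp_all
    have t1: "fps_deriv (fps_deriv (fps_deriv (fps_const (?g k) * yi ^ (2 * k))))
       = fps_const (- (of_nat (2 * k + 1 + 1) * - (of_nat (2 * k + 1) * - (of_nat (2 * k) * ?g k)))) * Y"
      unfolding dP Y_def e1 ..
    have t2: "fps_deriv (fps_const (?g (Suc k)) * yi ^ (2 * Suc k))
       = fps_const (- (of_nat (2 * Suc k) * ?g (Suc k))) * Y"
      unfolding dP Y_def e1 ..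
    have t3: "fpot C * fps_deriv (fps_const (?g k) * yi ^ (2 * k))
       = fps_const (C * - (of_nat (2 * k) * ?g k)) * Y"
      unfolding dP Y_def fpot_eq Pmul e1 ..
    have t4: "fps_deriv (fpot C) * (fps_const (?g k) * yi ^ (2 * k))
       = fps_const (- (of_nat 2 * C) * ?g k) * Y"
      unfolding dP Y_def fpot_eq Pmul e1 ..
    have "Lop C (Gzeta C (1/2)) $$ n =
       fps_const (- (of_nat (2 * k + 1 + 1) * - (of_nat (2 * k + 1) * - (of_nat (2 * k) * ?g k)))) * Y
       - 4 * (fps_const (- (of_nat (2 * Suc k) * ?g (Suc k))) * Y - 2 * (fps_const (C * - (of_nat (2 * k) * ?g k)) * Y))
       + 4 * (fps_const (- (of_nat 2 * C) * ?g k) * Y)"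
      unfolding Lop_nth Gnth n t1[symmetric] t2[symmetric] t3[symmetric] t4[symmetric]
      by (simp add: nat_add_distrib)
    also have "\<dots> = fps_const (- (of_nat (2 * k + 1 + 1) * - (of_nat (2 * k + 1) * - (of_nat (2 * k) * ?g k)))
       - 4 * (- (of_nat (2 * Suc k) * ?g (Suc k)) - 2 * (C * - (of_nat (2 * k) * ?g k)))
       + 4 * (- (of_nat 2 * C) * ?g k)) * Y"
      by (simp add: algebra_simps fps_const_add[symmetric] fps_const_mult[symmetric] fps_const_neg[symmetric]
        fps_const_sub[symmetric] fps_numeral_fps_const[symmetric] del: fps_const_add fps_const_mult fps_const_neg fps_const_sub)
    also have "(- (of_nat (2 * k + 1 + 1) * - (of_nat (2 * k + 1) * - (of_nat (2 * k) * ?g k)))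
       - 4 * (- (of_nat (2 * Suc k) * ?g (Suc k)) - 2 * (C * - (of_nat (2 * k) * ?g k)))
       + 4 * (- (of_nat 2 * C) * ?g k)) = 0"
    proof -
      have "8 * of_nat (Suc k) * ?g (Suc k) =
        ?g k * ((2 * of_nat k + 1) * (4 * of_nat k ^ 2 + 4 * of_nat k + 8 * C))" by (rule gL)
      then show ?thesis by (simp add: algebra_simps power2_eq_square)
    qed
    finally show ?thesis by simp
  qed
qed
definition Qop :: "complex \<Rightarrow> complex fps fls \<Rightarrow> complex fps fls" where
  "Qop C F = F * xderiv (xderiv F) - cc (1/2) * (xderiv F) ^ 2
                 - 2 * (lam - 2 * xc (fpot C)) * F ^ 2"

lemma half2: "cc (1/2) * 2 = 1"
  by (simp add: fls_const_numeral[symmetric] fps_numeral_fps_const del: fls_const_numeral)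

lemma xderiv_Q: "xderiv (Qop C F) = F * Lop C F"
proof -
  have h: "cc (1/2) * 2 = 1" by (rule half2)
  show ?thesis
    unfolding Qop_def Lop_def power2_eq_square
    apply simp
    using h by algebra
qed

lemma xderiv_zero [simp]: "xderiv 0 = 0"
  by (rule fls_eqI) simp

lemma eul_fpot: "eul (xc (fpot C)) = - 2 * xc (fpot C)"
proof -
  have "yv * fps_deriv (fpot C) = fps_const (- (of_nat 2 * C)) * yi ^ 2"
    unfolding fpot_eq dP using yv_P[of "- (of_nat 2 * C)" 2] by simp
  also have "\<dots> = - 2 * fpot C" by (simp add: fpot_eq fps_numeral_fps_const)
  finally have "eul (xc (fpot C)) = xc (- 2 * fpot C)" by simp
  also have "\<dots> = - 2 * xc (fpot C)"
    by (simp add: fls_const_mult_const[symmetric] del: fls_const_mult_const)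
  finally show ?thesis .
qed

lemma eul_cc [simp]: "eul (cc c) = 0" by simp

lemma eul_Q: "eul (Qop C (Gzeta C (1/2))) = - 2 * Qop C (Gzeta C (1/2))"
proof -
  let ?G = "Gzeta C (1/2)"
  have e0: "eul ?G = 0" by (rule eul_G)
  have e1: "eul (xderiv ?G) = - xderiv ?G" by (simp add: eul_xderiv e0)
  have e2: "eul (xderiv (xderiv ?G)) = - 2 * xderiv (xderiv ?G)"
    unfolding eul_xderiv[of "xderiv ?G"] e1 by simp
  show ?thesis
    unfolding Qop_def power2_eq_square
    by (simp add: e0 e1 e2 eul_fpot algebra_simps del: eul_const)
qed

lemma prod_low:
  fixes A B :: "complex fps fls"
  assumes "\<forall>i<0. A $$ i = 0" "\<forall>i<0. B $$ i = 0"
  shows "(A * B) $$ (-1) = 0" "(A * B) $$ 0 = A $$ 0 * B $$ 0"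
  by (simp_all add: fls_times_nth_gen[OF assms])

lemma G_low: "\<forall>i<0. Gzeta C a $$ i = 0" by (simp add: Gnth)
lemma G_0: "Gzeta C a $$ 0 = 1" by (simp add: Gnth Gcoeff_def)

lemma Q_G: "Qop C (Gzeta C (1/2)) = - 2 * lam"
proof -
  let ?G = "Gzeta C (1/2)"
  let ?Q = "Qop C ?G"
  have xQ: "xderiv ?Q = 0" by (simp add: xderiv_Q L_G)
  have "2 * (fls_X * fls_deriv ?Q) = - 2 * ?Q"
    using eul_Q[of C] by (simp add: eul_def xQ)
  then have co: "2 * (of_int m * ?Q $$ m) = - 2 * ?Q $$ m" for m
    by (metis (no_types) X_times_nth fls_deriv_nth diff_add_cancel fls_mult_of_numeral_nth(1)
        mult_minus_left fls_uminus_nth)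
  have l0: "\<forall>i<0. ?G $$ i = 0" by (rule G_low)
  have l1: "\<forall>i<0. xderiv ?G $$ i = 0" by (simp add: Gnth)
  have l2: "\<forall>i<0. xderiv (xderiv ?G) $$ i = 0" by (simp add: Gnth)
  have lG2: "\<forall>i<0. (?G * ?G) $$ i = 0"
    by (simp add: fls_times_nth_gen[OF l0 l0])
  have Qm1: "?Q $$ (-1) = - 2"
    unfolding Qop_def power2_eq_square
    by (simp add: prod_low[OF l0 l2] prod_low[OF l1 l1] prod_low[OF l0 l0] G_0
        left_diff_distrib fls_times_nth_gen[OF l0 lG2] mult.assoc)
  show ?thesis
  proof (rule fls_eqI)
    fix m :: int
    show "?Q $$ m = (- 2 * lam) $$ m"
    proof (cases "m = -1")
      case True then show ?thesis using Qm1 by (simp add: lam_def)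
    next
      case False
      have "(2 * of_int m + 2) * ?Q $$ m = 0" using co[of m] by (simp add: algebra_simps)
      moreover have "(2 * of_int m + 2 :: complex fps) \<noteq> 0"
      proof
        assume "(2 * of_int m + 2 :: complex fps) = 0"
        then have "fps_const (2 * of_int m + 2 :: complex) = 0"
          by (simp add: fps_of_int[symmetric] fps_numeral_fps_const)
        then have "(2 * of_int m + 2 :: complex) = 0" by simp
        then have "(of_int (2 * m + 2) :: complex) = 0" by simp
        then have "2 * m + 2 = 0" by (simp only: of_int_eq_0_iff)
        with False show False by simp
      qed
      ultimately have "?Q $$ m = 0" by simp
      then show ?thesis using False by (simp add: lam_def)
    qed
  qed
qed
lemma Q_diff: "Qop C (F + D) - Qop C F = D * xderiv (xderiv (F + D)) + F * xderiv (xderiv D)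
   - cc (1/2) * (xderiv D * (xderiv (F + D) + xderiv F))
   - 2 * (lam - 2 * xc (fpot C)) * (D * ((F + D) + F))"
  by (simp add: Qop_def power2_eq_square algebra_simps)

lemma uniq:
  assumes b_shape: "\<forall>n::int. n < 0 \<longrightarrow> fls_nth b n = 0"
    and b_lead: "fls_nth b 0 = 1"
    and bQ: "Qop C b = - 2 * lam"
  shows "b = Gzeta C (1/2)"
proof (rule ccontr)
  let ?G = "Gzeta C (1/2)"
  define D where "D = b - ?G"
  assume "b \<noteq> ?G"
  then have Dnz: "D \<noteq> 0" by (simp add: D_def)
  define n where "n = fls_subdegree D"
  have Dn: "D $$ n \<noteq> 0" using Dnz by (simp add: n_def)
  have zD: "\<forall>i<n. D $$ i = 0" by (simp add: n_def)
  have zD1: "\<forall>i<n. xderiv D $$ i = 0" using zD by simp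
  have zD2: "\<forall>i<n. xderiv (xderiv D) $$ i = 0" using zD by simp
  have l0: "\<forall>i<0. ?G $$ i = 0" by (rule G_low)
  have lb: "\<forall>i<0. b $$ i = 0" using b_shape by simp
  have lb2: "\<forall>i<0. xderiv (xderiv b) $$ i = 0" using lb by simp
  have lS: "\<forall>i<0. (xderiv b + xderiv ?G) $$ i = 0" using lb l0 by simp
  have lT: "\<forall>i<0. (b + ?G) $$ i = 0" using lb l0 by simp
  have bD: "b = ?G + D" by (simp add: D_def)
  have eq0: "Qop C (?G + D) - Qop C ?G = 0" using bQ Q_G[of C] bD by simp
  have X0: "D * xderiv (xderiv b) + ?G * xderiv (xderiv D)
   - cc (1/2) * (xderiv D * (xderiv b + xderiv ?G))
   - 2 * (lam - 2 * xc (fpot C)) * (D * (b + ?G)) = 0"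
  proof -
    have "D * xderiv (xderiv (?G + D)) + ?G * xderiv (xderiv D)
     - cc (1/2) * (xderiv D * (xderiv (?G + D) + xderiv ?G))
     - 2 * (lam - 2 * xc (fpot C)) * (D * ((?G + D) + ?G)) = 0"
      using eq0 unfolding Q_diff .
    then show ?thesis by (simp only: bD[symmetric])
  qed
  have "(D * xderiv (xderiv b) + ?G * xderiv (xderiv D)
   - cc (1/2) * (xderiv D * (xderiv b + xderiv ?G))
   - 2 * (lam - 2 * xc (fpot C)) * (D * (b + ?G))) $$ (n - 1) = 0"
    unfolding X0 by simp
  moreover have "(D * xderiv (xderiv b)) $$ (n - 1) = 0"
    by (simp add: fls_times_nth_gen[OF zD lb2])
  moreover have "(?G * xderiv (xderiv D)) $$ (n - 1) = 0"
    by (simp add: fls_times_nth_gen[OF l0 zD2])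
  moreover have "(xderiv D * (xderiv b + xderiv ?G)) $$ (n - 1) = 0"
    by (simp add: fls_times_nth_gen[OF zD1 lS])
  moreover have "(D * (b + ?G)) $$ (n - 1) = 0"
    by (simp add: fls_times_nth_gen[OF zD lT])
  moreover have "(D * (b + ?G)) $$ n = 2 * D $$ n"
    using b_lead by (simp add: fls_times_nth_gen[OF zD lT] G_0)
  ultimately have "- (4 * D $$ n) = 0"
    by (simp add: left_diff_distrib mult.assoc)
  then have "D $$ n = 0" by simp
  with Dn show False by simp
qed
lemma inv3: "inverse ((fps_X - 1) ^ 3) = yi ^ 3" by (simp add: inv_yv_pow[symmetric] yv_def)
lemma inv2: "inverse ((fps_X - 1) ^ 2) = yi ^ 2" by (simp add: inv_yv_pow[symmetric] yv_def)

lemma lhz_nth: "(lam_half_over_zeta32 * F) $$ n = yi ^ 3 * F $$ (n - 1)"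
  by (simp add: lam_half_over_zeta32_def inv3 mult.assoc)

lemma C2: "cc (1/2) * xderiv (Gzeta C (1/2)) = - cc C * lam_half_over_zeta32 * Gzeta C (3/2)"
proof (rule fls_eqI)
  fix n :: int
  show "(cc (1/2) * xderiv (Gzeta C (1/2))) $$ n = (- cc C * lam_half_over_zeta32 * Gzeta C (3/2)) $$ n"
  proof -
    have R: "(- cc C * lam_half_over_zeta32 * Gzeta C (3/2)) $$ n
        = - (fps_const C * (yi ^ 3 * Gzeta C (3/2) $$ (n - 1)))"
      by (simp add: mult.assoc lhz_nth)
    consider "n < 1" | k where "n = int (Suc k)"
    proof (cases "n < 1")
      case False then show ?thesis using that(2)[of "nat (n - 1)"] by simp
    qed
    then show ?thesis
    proof cases
      case 1
      then have "n < 0 \<or> n = 0" by linarith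
      then show ?thesis unfolding R by (auto simp: Gnth)
    next
      case 2
      have e: "2 * Suc k + 1 = 3 + 2 * k" by simp
      have "(cc (1/2) * xderiv (Gzeta C (1/2))) $$ n
         = fps_const (1/2) * fps_deriv (fps_const (Gcoeff C (1/2) (Suc k)) * yi ^ (2 * Suc k))"
        using 2 by (simp only: fls_mult_const_nth xderiv_nth Gnth) (simp del: of_nat_Suc)
      also have "\<dots> = fps_const (- (of_nat (Suc k) * Gcoeff C (1/2) (Suc k))) * yi ^ (3 + 2 * k)"
      proof -
        have "(1/2 :: complex) * - (of_nat (2 * Suc k) * Gcoeff C (1/2) (Suc k)) = - (of_nat (Suc k) * Gcoeff C (1/2) (Suc k))"
          by (simp only: of_nat_mult) simp
        then show ?thesis unfolding dP e mult.assoc[symmetric] fps_const_mult by simp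
      qed
      also have "\<dots> = fps_const (- (C * Gcoeff C (3/2) k)) * yi ^ (3 + 2 * k)"
        using g1[of C k] by (simp add: mult.commute)
      also have "\<dots> = - (fps_const C * (yi ^ 3 * Gzeta C (3/2) $$ (n - 1)))"
      proof -
        have "n - 1 = int k" using 2 by simp
        then show ?thesis
          by (simp add: Gnth power_add mult.assoc[symmetric] fps_const_neg[symmetric] del: fps_const_neg)
      qed
      finally show ?thesis unfolding R .
    qed
  qed
qed
lemma zeta_inv_nth: "(zeta_inv * F) $$ n = yi ^ 2 * F $$ (n - 1)"
  by (simp add: zeta_inv_def inv2 mult.assoc)
lemma zeta_nth: "(zeta * F) $$ n = yv ^ 2 * F $$ (n + 1)"
  by (simp add: zeta_def mult.assoc yv_def)
lemma zeta_inv_sq: "zeta_inv ^ 2 * K = zeta_inv * (zeta_inv * K)"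
  by (simp add: power2_eq_square mult.assoc)

lemma M:
  "fps_const (1/2) * fps_deriv (fps_deriv (Gzeta C (1/2) $$ n))
   = fps_const (3 * C) * (yi ^ 2 * (yi ^ 2 * Gzeta C (3/2) $$ (n - 1)))
     + fps_const (6 * C * (C + 1)) * (yi ^ 2 * (yi ^ 2 * (yi ^ 2 * Gzeta C (5/2) $$ (n - 1 - 1))))"
proof -
  consider "n < 0" | "n = 0" | "n = 1" | k where "n = int k + 2"
  proof -
    assume a: "n < 0 \<Longrightarrow> thesis" "n = 0 \<Longrightarrow> thesis" "n = 1 \<Longrightarrow> thesis"
      "\<And>k. n = int k + 2 \<Longrightarrow> thesis"
    show thesis
    proof (cases "n < 2")
      case True then show ?thesis using a(1-3) by linarith
    next
      case False then show ?thesis using a(4)[of "nat (n - 2)"] by simp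
    qed
  qed
  then show ?thesis
  proof cases
    case 1 then show ?thesis by (simp add: Gnth)
  next
    case 2 then show ?thesis by (simp add: Gnth)
  next
    case 3
    let ?g = "Gcoeff C (1/2) 1" and ?h = "Gcoeff C (3/2) 0"
    have g: "?g = C * ?h" using g1[of C 0] by simp
    have g': "Gcoeff C (1/2) (Suc 0) = C * ?h" using g1[of C 0] by simp
    have "fps_const (1/2) * fps_deriv (fps_deriv (Gzeta C (1/2) $$ n))
       = fps_const (1/2) * fps_deriv (fps_deriv (fps_const ?g * yi ^ 2))"
      using 3 by (simp add: Gnth)
    also have "\<dots> = fps_const (1/2 * - (of_nat (2+1) * - (of_nat 2 * ?g))) * yi ^ (2+1+1)"
      unfolding dP mult.assoc[symmetric] fps_const_mult ..
    also have "\<dots> = fps_const (3 * C * ?h) * yi ^ (2 + 2)"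
      by (simp add: g g')
    also have "\<dots> = fps_const (3 * C) * (yi ^ 2 * (yi ^ 2 * (fps_const ?h * yi ^ (2 * 0))))"
      by (simp only: power_add fps_const_mult[symmetric] mult_ac power_0 mult_0_right mult_zero_left mult_1_right mult_1_left)
    also have "\<dots> = fps_const (3 * C) * (yi ^ 2 * (yi ^ 2 * Gzeta C (3/2) $$ (n - 1)))"
      using 3 by (simp only: Gnth) simp
    finally show ?thesis using 3 by (simp add: Gnth)
  next
    case 4
    let ?g = "Gcoeff C (1/2) (k + 2)" and ?h = "Gcoeff C (3/2) (k + 1)" and ?q = "Gcoeff C (5/2) k"
    have sc: "1/2 * - (of_nat (2 * (k + 2) + 1) * - (of_nat (2 * (k + 2)) * ?g))
       = 3 * C * ?h + 6 * C * (C + 1) * ?q"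
    proof -
      have a1: "?g * of_nat (k + 2) = C * ?h" using g1[of C "Suc k"] by simp
      have a2: "?h * of_nat (k + 1) = 3 * (C + 1) * ?q" using g2[of C k] by simp
      have "1/2 * - (of_nat (2 * (k + 2) + 1) * - (of_nat (2 * (k + 2)) * ?g))
         = (2 * of_nat k + 5) * (?g * of_nat (k + 2))" by (simp add: algebra_simps)
      also have "\<dots> = 3 * C * ?h + 2 * C * (?h * of_nat (k + 1))" unfolding a1 by (simp add: algebra_simps)
      also have "\<dots> = 3 * C * ?h + 6 * C * (C + 1) * ?q" unfolding a2 by (simp add: algebra_simps)
      finally show ?thesis .
    qed
    have n1: "nat n = k + 2" "nat (n - 1) = k + 1" "nat (n - 1 - 1) = k" "\<not> n < 0" "\<not> n - 1 < 0" "\<not> n - 1 - 1 < 0"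
      using 4 by auto
    have "fps_const (1/2) * fps_deriv (fps_deriv (Gzeta C (1/2) $$ n))
       = fps_const (1/2) * fps_deriv (fps_deriv (fps_const ?g * yi ^ (2 * (k + 2))))"
      by (simp only: Gnth n1 if_False)
    also have "\<dots> = fps_const (1/2 * - (of_nat (2 * (k + 2) + 1) * - (of_nat (2 * (k + 2)) * ?g))) * yi ^ (2 * (k + 2) + 1 + 1)"
      unfolding dP mult.assoc[symmetric] fps_const_mult ..
    also have "\<dots> = fps_const (3 * C * ?h + 6 * C * (C + 1) * ?q) * yi ^ (2 * k + 6)"
    proof -
      have "2 * (k + 2) + 1 + 1 = 2 * k + 6" by simp
      then show ?thesis unfolding sc by (rule arg_cong)
    qed
    also have "\<dots> = fps_const (3 * C) * (yi ^ 2 * (yi ^ 2 * (fps_const ?h * yi ^ (2 * (k + 1)))))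
     + fps_const (6 * C * (C + 1)) * (yi ^ 2 * (yi ^ 2 * (yi ^ 2 * (fps_const ?q * yi ^ (2 * k)))))"
    proof -
      have e1: "2 * k + 6 = 2 + (2 + 2 * (k + 1))" "2 * k + 6 = 2 + (2 + (2 + 2 * k))" by simp_all
      have p1: "yi ^ 2 * (yi ^ 2 * (fps_const ?h * yi ^ (2 * (k + 1)))) = fps_const ?h * yi ^ (2 * k + 6)"
        unfolding e1(1) power_add by (simp only: mult_ac)
      have p2: "yi ^ 2 * (yi ^ 2 * (yi ^ 2 * (fps_const ?q * yi ^ (2 * k)))) = fps_const ?q * yi ^ (2 * k + 6)"
        unfolding e1(2) power_add by (simp only: mult_ac)
      show ?thesis unfolding p1 p2
        by (simp only: fps_const_add[symmetric] fps_const_mult[symmetric] distrib_right mult.assoc)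
    qed
    also have "\<dots> = fps_const (3 * C) * (yi ^ 2 * (yi ^ 2 * Gzeta C (3/2) $$ (n - 1)))
     + fps_const (6 * C * (C + 1)) * (yi ^ 2 * (yi ^ 2 * (yi ^ 2 * Gzeta C (5/2) $$ (n - 1 - 1))))"
      by (simp only: Gnth n1 if_False)
    finally show ?thesis .
  qed
qed
lemma C4: "(lam - 2 * xc (fpot C)) * Gzeta C (1/2) - cc (1/2) * xderiv (xderiv (Gzeta C (1/2)))
        = lam * zeta_inv * ((zeta - cc (2 * C)) * Gzeta C (1/2)
             - cc (3 * C) * zeta_inv * Gzeta C (3/2)
             - cc (6 * C * (C + 1)) * zeta_inv ^ 2 * Gzeta C (5/2))"
proof (rule fls_eqI)
  fix n :: int
  let ?G = "Gzeta C (1/2)" and ?H = "Gzeta C (3/2)" and ?K = "Gzeta C (5/2)"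
  have L: "((lam - 2 * xc (fpot C)) * ?G - cc (1/2) * xderiv (xderiv ?G)) $$ n
     = ?G $$ (n + 1) - 2 * (fpot C * ?G $$ n) - fps_const (1/2) * fps_deriv (fps_deriv (?G $$ n))"
    by (simp add: left_diff_distrib mult.assoc)
  have R: "(lam * zeta_inv * ((zeta - cc (2 * C)) * ?G
             - cc (3 * C) * zeta_inv * ?H
             - cc (6 * C * (C + 1)) * zeta_inv ^ 2 * ?K)) $$ n
     = yi ^ 2 * (yv ^ 2 * ?G $$ (n + 1) - fps_const (2 * C) * ?G $$ n
         - fps_const (3 * C) * (yi ^ 2 * ?H $$ (n - 1))
         - fps_const (6 * C * (C + 1)) * (yi ^ 2 * (yi ^ 2 * ?K $$ (n - 1 - 1))))"
    by (simp add: mult.assoc left_diff_distrib zeta_inv_nth zeta_nth zeta_inv_sq)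
  have yy: "yi ^ 2 * yv ^ 2 = 1"
    by (metis power_mult_distrib yv_yi mult.commute power_one)
  have two: "fps_const (2 * C) = 2 * fps_const C" by (simp add: fps_numeral_fps_const)
  note m = M[of C n]
  show "((lam - 2 * xc (fpot C)) * ?G - cc (1/2) * xderiv (xderiv ?G)) $$ n = (lam * zeta_inv * ((zeta - cc (2 * C)) * ?G
             - cc (3 * C) * zeta_inv * ?H
             - cc (6 * C * (C + 1)) * zeta_inv ^ 2 * ?K)) $$ n"
    unfolding L R unfolding fpot_eq using m yy two by algebra
qed

theorem theorem1p9:
  fixes C :: complex and b :: "complex fps fls"
  assumes b_shape: "\<forall>n::int. n < 0 \<longrightarrow> fls_nth b n = 0"
    and b_lead: "fls_nth b 0 = 1"
    and b_eq: "b * xderiv (xderiv b) - cc (1/2) * (xderiv b) ^ 2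
                 - 2 * (lam - 2 * xc (fpot C)) * b ^ 2 = - 2 * lam"
  shows "b = Gzeta C (1/2)
    \<and> cc (1/2) * xderiv b
        = - cc C * lam_half_over_zeta32 * Gzeta C (3/2)
    \<and> b = Gzeta C (1/2)
    \<and> (lam - 2 * xc (fpot C)) * b - cc (1/2) * xderiv (xderiv b)
        = lam * zeta_inv * ((zeta - cc (2 * C)) * Gzeta C (1/2)
             - cc (3 * C) * zeta_inv * Gzeta C (3/2)
             - cc (6 * C * (C + 1)) * zeta_inv ^ 2 * Gzeta C (5/2))
    \<and> - (cc (1/2) * xderiv b)
        = cc C * lam_half_over_zeta32 * Gzeta C (3/2)"
proof -
  have bQ: "Qop C b = - 2 * lam" unfolding Qop_def using b_eq .
  have bG: "b = Gzeta C (1/2)" by (rule uniq[OF b_shape b_lead bQ])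
  show ?thesis unfolding bG using C2[of C] C4[of C] by simp
qed

end
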